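(* Let $G$ be a finite abelian group and $\pi$ a permutation of $G\setminus\{\epsilon\}$ satisfying (i) $\pi^3=\mathrm{id}$, (ii) $\pi(x)^{-1}=\pi^{-1}(x^{-1})$ for all $x\neq\epsilon$, and (iii) $\pi(st)=\pi(t)\,\pi\bigl(\pi(s)^{-1}\pi(t^{-1})\bigr)$ for all non-identity $s,t$ with $s\ne t^{-1}$. Then there is an element $\omega\in G$ such that $s\,\pi(s)\,\pi^{-1}(s)=\omega$ for every $s\in G\setminus\{\epsilon\}$, and $\omega^2=\epsilon$.
   Context: $\epsilon$ denotes the identity element of $G$; $G$ is written multiplicatively. *)

theory Defs
  imports "HOL-Algebra.Algebra"
begin

end

theory Submission
  imports Defs
begin

theorem lemma6p2:
  fixes G (structure) and \<pi> :: "'a \<Rightarrow> 'a"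
  assumes "comm_group G" and "finite (carrier G)"
    and perm: "bij_betw \<pi> (carrier G - {\<one>}) (carrier G - {\<one>})"
    and cube: "\<And>x. x \<in> carrier G - {\<one>} \<Longrightarrow> \<pi> (\<pi> (\<pi> x)) = x"
    and inv_rel: "\<And>x. x \<in> carrier G - {\<one>} \<Longrightarrow>
        inv (\<pi> x) = inv_into (carrier G - {\<one>}) \<pi> (inv x)"
    and cocycle: "\<And>s t. s \<in> carrier G - {\<one>} \<Longrightarrow> t \<in> carrier G - {\<one>} \<Longrightarrow>
        s \<noteq> inv t \<Longrightarrow>
        \<pi> (s \<otimes> t) = \<pi> t \<otimes> \<pi> (inv (\<pi> s) \<otimes> \<pi> (inv t))"
  shows "\<exists>\<omega>\<in>carrier G.
           (\<forall>s\<in>carrier G - {\<one>}. s \<otimes> \<pi> s \<otimes> inv_into (carrier G - {\<one>}) \<pi> s = \<omega>)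
           \<and> \<omega> \<otimes> \<omega> = \<one>"
proof -
  interpret comm_group G by fact
  define N where "N = carrier G - {\<one>}"
  have piN: "\<pi> x \<in> N" if "x \<in> N" for x
    using perm that unfolding N_def by (meson bij_betwE)
  have injN: "inj_on \<pi> N" using perm unfolding N_def by (simp add: bij_betw_def)
  have cube': "\<pi> (\<pi> (\<pi> x)) = x" if "x \<in> N" for x using cube that unfolding N_def by blast
  have rho: "inv_into N \<pi> x = \<pi> (\<pi> x)" if "x \<in> N" for x
  proof -
    have "inv_into N \<pi> x = inv_into N \<pi> (\<pi> (\<pi> (\<pi> x)))" using cube' that by simp
    also have "\<dots> = \<pi> (\<pi> x)" using injN piN that by (simp add: inv_into_f_f)
    finally show ?thesis .
  qed
  have NG: "x \<in> carrier G" if "x \<in> N" for x using that unfolding N_def by blast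
  have N1: "x \<noteq> \<one>" if "x \<in> N" for x using that unfolding N_def by blast
  have invN: "inv x \<in> N" if "x \<in> N" for x using that unfolding N_def by auto
  have ii: "inv (\<pi> x) = \<pi> (\<pi> (inv x))" if "x \<in> N" for x
    using inv_rel[of x] rho[OF invN[OF that]] that unfolding N_def by simp
  have ii': "\<pi> (inv y) = inv (\<pi> (\<pi> y))" if "y \<in> N" for y
  proof -
    have "inv (\<pi> (\<pi> y)) = \<pi> (\<pi> (inv (\<pi> y)))" using ii piN that by blast
    also have "\<dots> = \<pi> (\<pi> (\<pi> (\<pi> (inv y))))" using ii that by simp
    also have "\<dots> = \<pi> (inv y)" using cube' invN that by simp
    finally show ?thesis by simp
  qed
  define f where "f s = s \<otimes> \<pi> s \<otimes> \<pi> (\<pi> s)" for s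
  have fG: "f s \<in> carrier G" if "s \<in> N" for s
    unfolding f_def using that by (simp add: NG piN)
  have fpi: "f (\<pi> s) = f s" if "s \<in> N" for s
    unfolding f_def using that cube' NG piN by (simp add: m_ac)
  have finv: "f (inv y) = inv (f y)" if "y \<in> N" for y
  proof -
    have "\<pi> (\<pi> (inv y)) = inv (\<pi> y)" using ii that by simp
    then show ?thesis unfolding f_def using that ii' NG piN by (simp add: inv_mult m_ac)
  qed
  have prodN: "s \<otimes> t \<in> N" if "s \<in> N" "t \<in> N" "s \<noteq> inv t" for s t
  proof -
    have "s \<otimes> t \<noteq> \<one>"
    proof
      assume "s \<otimes> t = \<one>"
      then have "s = inv t" using that NG by (simp add: inv_equality)
      then show False using that by simp
    qed
    then show ?thesis using that NG unfolding N_def by auto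
  qed
  have AN: "\<pi> s \<otimes> \<pi> (\<pi> t) \<in> N" if "s \<in> N" "t \<in> N" "s \<noteq> inv t" for s t
  proof -
    have "\<pi> s \<otimes> \<pi> (\<pi> t) \<noteq> \<one>"
    proof
      assume "\<pi> s \<otimes> \<pi> (\<pi> t) = \<one>"
      then have "\<pi> (\<pi> t) = inv (\<pi> s)" using that NG piN
        by (metis inv_equality m_comm)
      also have "\<dots> = \<pi> (\<pi> (inv s))" using ii that by simp
      finally have "\<pi> (\<pi> (\<pi> t)) = \<pi> (\<pi> (\<pi> (inv s)))" by simp
      then have "t = inv s" using cube' invN that by simp
      then show False using that NG by simp
    qed
    then show ?thesis using that NG piN unfolding N_def by auto
  qed
  have E: "\<pi> (s \<otimes> t) = \<pi> t \<otimes> inv (\<pi> (\<pi> (\<pi> s \<otimes> \<pi> (\<pi> t))))"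
    if "s \<in> N" "t \<in> N" "s \<noteq> inv t" for s t
  proof -
    have "\<pi> (inv t) = inv (\<pi> (\<pi> t))" using ii' that by simp
    then have "inv (\<pi> s) \<otimes> \<pi> (inv t) = inv (\<pi> s \<otimes> \<pi> (\<pi> t))"
      using that NG piN by (simp add: inv_mult)
    then show ?thesis using cocycle[of s t] that ii'[OF AN[OF that]] unfolding N_def by simp
  qed
  have R: "\<pi> (\<pi> (s \<otimes> t)) = \<pi> (\<pi> s) \<otimes> inv (\<pi> (\<pi> s \<otimes> \<pi> (\<pi> t)))"
    if "s \<in> N" "t \<in> N" "s \<noteq> inv t" for s t
  proof -
    have t1: "inv t \<noteq> inv (inv s)" using that NG by simp
    have "\<pi> (inv t \<otimes> inv s) = \<pi> (inv s) \<otimes> \<pi> (inv (\<pi> (inv t)) \<otimes> \<pi> (inv (inv s)))"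
      using cocycle[of "inv t" "inv s"] t1 invN that unfolding N_def by simp
    also have "inv (\<pi> (inv t)) = \<pi> (\<pi> t)" using ii' that NG piN by simp
    also have "\<pi> (inv (inv s)) = \<pi> s" using that NG by simp
    also have "\<pi> (inv s) = inv (\<pi> (\<pi> s))" using ii' that by simp
    finally have a: "\<pi> (inv t \<otimes> inv s) = inv (\<pi> (\<pi> s)) \<otimes> \<pi> (\<pi> (\<pi> t) \<otimes> \<pi> s)" .
    have "inv t \<otimes> inv s = inv (s \<otimes> t)" using that NG by (simp add: inv_mult m_ac)
    then have b: "\<pi> (inv t \<otimes> inv s) = inv (\<pi> (\<pi> (s \<otimes> t)))" using ii' prodN that by simp
    have c: "\<pi> (\<pi> t) \<otimes> \<pi> s = \<pi> s \<otimes> \<pi> (\<pi> t)" using that NG piN by (simp add: m_comm)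
    have "inv (\<pi> (\<pi> (s \<otimes> t))) = inv (\<pi> (\<pi> s)) \<otimes> \<pi> (\<pi> s \<otimes> \<pi> (\<pi> t))"
      using a b c by simp
    then have "\<pi> (\<pi> (s \<otimes> t)) = inv (inv (\<pi> (\<pi> s)) \<otimes> \<pi> (\<pi> s \<otimes> \<pi> (\<pi> t)))"
      using prodN that NG piN by (metis inv_inv)
    then show ?thesis using that NG piN AN by (simp add: inv_mult m_comm)
  qed
  have L: "f (s \<otimes> t) \<otimes> f (\<pi> s \<otimes> \<pi> (\<pi> t)) = f s \<otimes> f t"
    if "s \<in> N" "t \<in> N" "s \<noteq> inv t" for s t
  proof -
    define A where "A = \<pi> s \<otimes> \<pi> (\<pi> t)"
    have AN': "A \<in> N" unfolding A_def using AN that by blast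
    have "f (s \<otimes> t) = s \<otimes> t \<otimes> (\<pi> t \<otimes> inv (\<pi> (\<pi> A))) \<otimes> (\<pi> (\<pi> s) \<otimes> inv (\<pi> A))"
      unfolding f_def A_def using E[OF that] R[OF that] by simp
    moreover have "f A = A \<otimes> \<pi> A \<otimes> \<pi> (\<pi> A)" unfolding f_def by simp
    moreover have "f s \<otimes> f t = s \<otimes> t \<otimes> \<pi> t \<otimes> \<pi> (\<pi> s) \<otimes> A"
      unfolding f_def A_def using that NG piN by (simp add: m_ac)
    ultimately show ?thesis
      using that NG piN AN' unfolding A_def[symmetric]
      by (simp add: m_ac r_inv l_inv inv_solve_left inv_solve_right)
  qed
  have K: "f (s \<otimes> t) = f (\<pi> s \<otimes> \<pi> (\<pi> t))"
    if "s \<in> N" "t \<in> N" "s \<noteq> inv t" for s t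
  proof -
    have ts: "t \<noteq> inv s" using that NG by (metis inv_inv)
    have st: "t \<otimes> s = s \<otimes> t" using that NG by (simp add: m_comm)
    have ps: "\<pi> s \<noteq> inv (\<pi> (\<pi> t))"
    proof
      assume "\<pi> s = inv (\<pi> (\<pi> t))"
      then have "\<pi> s \<otimes> \<pi> (\<pi> t) = \<one>" using that NG piN by simp
      then show False using AN[OF that] N1 by simp
    qed
    have l1: "f (s \<otimes> t) \<otimes> f (\<pi> s \<otimes> \<pi> (\<pi> t)) = f s \<otimes> f t" using L[OF that] .
    have l2: "f (s \<otimes> t) \<otimes> f (\<pi> t \<otimes> \<pi> (\<pi> s)) = f t \<otimes> f s" using L[OF that(2,1) ts] st by simp
    have l3: "f (\<pi> s \<otimes> \<pi> (\<pi> t)) \<otimes> f (\<pi> (\<pi> s) \<otimes> \<pi> (\<pi> (\<pi> (\<pi> t)))) = f (\<pi> s) \<otimes> f (\<pi> (\<pi> t))"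
      using L[OF piN[OF that(1)] piN[OF piN[OF that(2)]] ps] by simp
    have e1: "\<pi> (\<pi> (\<pi> (\<pi> t))) = \<pi> t" using cube' that by simp
    have e2: "\<pi> (\<pi> s) \<otimes> \<pi> t = \<pi> t \<otimes> \<pi> (\<pi> s)" using that NG piN m_comm by blast
    have l3': "f (\<pi> s \<otimes> \<pi> (\<pi> t)) \<otimes> f (\<pi> t \<otimes> \<pi> (\<pi> s)) = f s \<otimes> f t"
      using l3 e1 e2 fpi that piN by simp
    have AN1: "\<pi> s \<otimes> \<pi> (\<pi> t) \<in> N" using AN that by blast
    have BN1: "\<pi> t \<otimes> \<pi> (\<pi> s) \<in> N" using AN[OF that(2,1) ts] by blast
    have fc: "f t \<otimes> f s = f s \<otimes> f t" using fG that by (simp add: m_comm)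
    have "f (s \<otimes> t) \<otimes> f (\<pi> t \<otimes> \<pi> (\<pi> s)) = f (\<pi> s \<otimes> \<pi> (\<pi> t)) \<otimes> f (\<pi> t \<otimes> \<pi> (\<pi> s))"
      using l2 l3' fc by simp
    then show ?thesis using fG AN1 BN1 prodN that by (simp add: r_cancel)
  qed
  have F: "f x = f (\<pi> t \<otimes> inv (\<pi> x))" if "x \<in> N" "t \<in> N" "x \<noteq> t" for x t
  proof -
    define s where "s = x \<otimes> inv t"
    have sG: "s \<in> carrier G" unfolding s_def using that NG by simp
    have stx: "s \<otimes> t = x" unfolding s_def using that NG by (simp add: m_assoc)
    have s1: "s \<noteq> \<one>"
    proof
      assume "s = \<one>" then have "x = t" using stx that NG by simp
      then show False using that by simp
    qed
    have sN: "s \<in> N" using sG s1 unfolding N_def by simp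
    have sinv: "s \<noteq> inv t"
    proof
      assume "s = inv t" then have "x = \<one>" using stx that NG by simp
      then show False using that N1 by simp
    qed
    define A where "A = \<pi> s \<otimes> \<pi> (\<pi> t)"
    have AN': "A \<in> N" unfolding A_def using AN sN sinv that by blast
    have "\<pi> x = \<pi> t \<otimes> inv (\<pi> (\<pi> A))" using E[OF sN that(2) sinv] stx unfolding A_def by simp
    then have "\<pi> (\<pi> A) = \<pi> t \<otimes> inv (\<pi> x)" using that NG piN AN'
      by (metis inv_closed inv_inv inv_solve_left m_comm)
    moreover have "f (\<pi> (\<pi> A)) = f A" using fpi piN AN' by simp
    moreover have "f x = f A" using K[OF sN that(2) sinv] stx unfolding A_def by simp
    ultimately show ?thesis by simp
  qed
  have Gp: "f x \<otimes> f t = \<one>" if "x \<in> N" "t \<in> N" "x \<noteq> t" for x t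
  proof -
    have ne: "\<pi> t \<noteq> \<pi> x" using injN that by (metis inj_on_def)
    have yN: "\<pi> t \<otimes> inv (\<pi> x) \<in> N"
    proof -
      have "\<pi> t \<otimes> inv (\<pi> x) \<noteq> \<one>"
      proof
        assume "\<pi> t \<otimes> inv (\<pi> x) = \<one>"
        then have "\<pi> t = \<pi> x" using that NG piN by (metis inv_closed inv_equality inv_inv)
        then show False using ne by simp
      qed
      then show ?thesis using that NG piN unfolding N_def by simp
    qed
    have "f t = f (\<pi> x \<otimes> inv (\<pi> t))" using F that by auto
    also have "\<pi> x \<otimes> inv (\<pi> t) = inv (\<pi> t \<otimes> inv (\<pi> x))"
      using that NG piN by (simp add: inv_mult m_comm)
    also have "f (inv (\<pi> t \<otimes> inv (\<pi> x))) = inv (f x)" using finv yN F that by simp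
    finally show ?thesis using fG that by simp
  qed
  have fform: "s \<otimes> \<pi> s \<otimes> inv_into (carrier G - {\<one>}) \<pi> s = f s" if "s \<in> N" for s
    using rho that unfolding f_def N_def by simp
  have const: "f a = f b" if "a \<in> N" "b \<in> N" for a b
  proof (cases "a = b")
    case True then show ?thesis by simp
  next
    case False
    show ?thesis
    proof (cases "\<exists>u\<in>N. u \<noteq> a \<and> u \<noteq> b")
      case True
      then obtain u where u: "u \<in> N" "u \<noteq> a" "u \<noteq> b" by blast
      have "f a \<otimes> f u = \<one>" "f b \<otimes> f u = \<one>" using Gp u that by auto
      then show ?thesis using fG u that by (metis inv_equality)
    next
      case False2: False
      then have Nab: "N = {a, b}" using that by blast
      have pa: "\<pi> a = a"
      proof (rule ccontr)
        assume "\<pi> a \<noteq> a" then have pab: "\<pi> a = b" using piN[OF that(1)] Nab by blast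
        have "\<pi> b = a \<or> \<pi> b = b" using piN[OF that(2)] Nab by blast
        then show False
        proof
          assume "\<pi> b = a" then have "\<pi> (\<pi> (\<pi> a)) = b" using pab by simp
          then show False using cube' that \<open>a \<noteq> b\<close> by simp
        next
          assume "\<pi> b = b" then show False using injN that pab \<open>a \<noteq> b\<close> by (metis inj_on_def)
        qed
      qed
      have pb: "\<pi> b = b"
      proof (rule ccontr)
        assume "\<pi> b \<noteq> b" then have pab: "\<pi> b = a" using piN[OF that(2)] Nab by blast
        then show False using injN that pa \<open>a \<noteq> b\<close> by (metis inj_on_def)
      qed
      have ia: "inv a = b"
      proof (rule ccontr)
        assume "inv a \<noteq> b" then have iaa: "inv a = a" using invN[OF that(1)] Nab by blast
        have "inv b \<noteq> a" using iaa that NG \<open>a \<noteq> b\<close> by (metis inv_inv)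
        then have ibb: "inv b = b" using invN[OF that(2)] Nab by blast
        have abG: "a \<otimes> b \<in> carrier G" using that NG by simp
        have aG: "a \<in> carrier G" and bG: "b \<in> carrier G" using that NG by auto
        have "a \<otimes> b \<noteq> \<one>"
        proof
          assume "a \<otimes> b = \<one>"
          then have "inv b = a" using inv_equality aG bG by blast
          then show False using ibb \<open>a \<noteq> b\<close> by simp
        qed
        then have "a \<otimes> b \<in> N" using abG unfolding N_def by simp
        then have "a \<otimes> b = a \<or> a \<otimes> b = b" using Nab by blast
        then show False using aG bG N1 that by auto
      qed
      have aa: "a \<otimes> a = b"
      proof -
        have aG: "a \<in> carrier G" using that NG by auto
        have "a \<otimes> a \<noteq> \<one>"
        proof
          assume "a \<otimes> a = \<one>"
          then have "inv a = a" using inv_equality aG by blast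
          then show False using ia \<open>a \<noteq> b\<close> by simp
        qed
        moreover have "a \<otimes> a \<noteq> a" using aG N1 that by simp
        ultimately have "a \<otimes> a \<in> N" using aG unfolding N_def by simp
        then have "a \<otimes> a = a \<or> a \<otimes> a = b" using Nab by blast
        then show ?thesis using \<open>a \<otimes> a \<noteq> a\<close> by blast
      qed
      have "b \<otimes> a = \<one>" using ia that NG by (metis l_inv)
      then have fa: "f a = \<one>" unfolding f_def using pa aa ia that NG by simp
      have fb: "f b = \<one>" using finv[OF that(1)] fa ia by simp
      show ?thesis using fa fb by simp
    qed
  qed
  show ?thesis
  proof (cases "N = {}")
    case True
    then have "carrier G - {\<one>} = {}" unfolding N_def .
    then have e: "\<And>s. s \<in> carrier G - {\<one>} \<Longrightarrow> False" by blast
    show ?thesis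
    proof (intro bexI[of _ "\<one>"] conjI ballI)
      fix s assume "s \<in> carrier G - {\<one>}"
      then show "s \<otimes> \<pi> s \<otimes> inv_into (carrier G - {\<one>}) \<pi> s = \<one>" using e by blast
    qed simp_all
  next
    case False
    then obtain a where a: "a \<in> N" by blast
    have "f a \<otimes> f a = \<one>"
    proof -
      have "f a \<otimes> f a = f a \<otimes> f (inv a)" using const[OF a invN[OF a]] by simp
      also have "\<dots> = \<one>" using finv a fG by simp
      finally show ?thesis .
    qed
    moreover have "\<forall>s\<in>carrier G - {\<one>}. s \<otimes> \<pi> s \<otimes> inv_into (carrier G - {\<one>}) \<pi> s = f a"
    proof
      fix s assume "s \<in> carrier G - {\<one>}"
      then have sN: "s \<in> N" unfolding N_def .
      show "s \<otimes> \<pi> s \<otimes> inv_into (carrier G - {\<one>}) \<pi> s = f a"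
        using fform[OF sN] const[OF sN a] by simp
    qed
    ultimately show ?thesis using fG[OF a] by blast
  qed
qed

end
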